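(* Let $(\mathfrak{h},[\;,\;],\langle\;,\;\rangle)$ be a $\lambda$-Einstein Lorentzian nilpotent Lie algebra with non-degenerate center $\mathrm{Z}(\mathfrak{h})$, and let $\mathfrak{g}$, $[\;,\;]_{\mathfrak{g}}$, $\omega$ be as in the context. If $\lambda\neq0$, then the cohomology class of $\omega$ is non-trivial, i.e., there is no linear map $\alpha:\mathfrak{g}\to\mathrm{Z}(\mathfrak{h})$ with $\omega(u,v)=-\alpha([u,v]_{\mathfrak{g}})$ for all $u,v\in\mathfrak{g}$. In particular, $H^2(\mathfrak{g},\mathrm{Z}(\mathfrak{h}))\neq\{0\}$ (cohomology of $(\mathfrak{g},[\;,\;]_{\mathfrak{g}})$ with values in the trivial module $\mathrm{Z}(\mathfrak{h})$).
   Context: Lorentzian means a nondegenerate symmetric bilinear form of signature $(1,n-1)$. With $\mathrm{Z}(\mathfrak{h})$ nondegenerate, put $\mathfrak{g}=\mathrm{Z}(\mathfrak{h})^\perp$; for $u,v\in\mathfrak{g}$ write $[u,v]=[u,v]_{\mathfrak{g}}+\omega(u,v)$ with $[u,v]_{\mathfrak{g}}\in\mathfrak{g}$, $\omega(u,v)\in\mathrm{Z}(\mathfrak{h})$; then $(\mathfrak{g},[\;,\;]_{\mathfrak{g}})$ is a Lie algebra and $\omega$ is a $2$-cocycle of it with values in $\mathrm{Z}(\mathfrak{h})$ (trivial action). Ricci operator: Levi-Civita product $2\langle \mathrm{L}_uv,w\rangle=\langle[u,v],w\rangle+\langle[w,u],v\rangle+\langle[w,v],u\rangle$, $K(u,v)=\mathrm{L}_{[u,v]}-[\mathrm{L}_u,\mathrm{L}_v]$,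 $\langle\mathrm{Ric}\,u,v\rangle=\mathrm{tr}(w\mapsto K(u,w)v)$; $\lambda$-Einstein means $\mathrm{Ric}=\lambda\,\mathrm{Id}$. *)

theory Defs
  imports "HOL-Analysis.Analysis"
begin

text \<open>A finite-dimensional real vector space is modelled by a type 'a of class euclidean_space;
  a Lie bracket is a bilinear map br, a metric is a bilinear form B.\<close>

definition lie_algebra :: "('a::euclidean_space \<Rightarrow> 'a \<Rightarrow> 'a) \<Rightarrow> bool" where
  "lie_algebra br \<longleftrightarrow> bilinear br \<and> (\<forall>x. br x x = 0) \<and>
     (\<forall>x y z. br x (br y z) + br y (br z x) + br z (br x y) = 0)"

fun lower_central :: "('a::euclidean_space \<Rightarrow> 'a \<Rightarrow> 'a) \<Rightarrow> nat \<Rightarrow> 'a set" where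
  "lower_central br 0 = UNIV"
| "lower_central br (Suc k) = span {br x y | x y. y \<in> lower_central br k}"

definition nilpotent_lie :: "('a::euclidean_space \<Rightarrow> 'a \<Rightarrow> 'a) \<Rightarrow> bool" where
  "nilpotent_lie br \<longleftrightarrow> lie_algebra br \<and> (\<exists>k. lower_central br k = {0})"

definition lie_center :: "('a::euclidean_space \<Rightarrow> 'a \<Rightarrow> 'a) \<Rightarrow> 'a set" where
  "lie_center br = {z. \<forall>x. br z x = 0}"

text \<open>Lorentzian: symmetric bilinear form of signature (1, n-1), n = DIM('a):
  in suitable linear coordinates T it is -x_1 y_1 + x_2 y_2 + ... + x_n y_n.\<close>
definition lorentzian :: "('a::euclidean_space \<Rightarrow> 'a \<Rightarrow> real) \<Rightarrow> bool" where
  "lorentzian B \<longleftrightarrow> bilinear B \<and> (\<forall>x y. B x y = B y x) \<and>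
     (\<exists>(T::'a \<Rightarrow> 'a) b0. linear T \<and> bij T \<and> b0 \<in> Basis \<and>
        (\<forall>x y. B (T x) (T y) = x \<bullet> y - 2 * (x \<bullet> b0) * (y \<bullet> b0)))"

definition nondegenerate_on :: "('a::zero \<Rightarrow> 'a \<Rightarrow> real) \<Rightarrow> 'a set \<Rightarrow> bool" where
  "nondegenerate_on B S \<longleftrightarrow> (\<forall>z\<in>S. (\<forall>w\<in>S. B z w = 0) \<longrightarrow> z = 0)"

definition orth_compl :: "('a \<Rightarrow> 'a \<Rightarrow> real) \<Rightarrow> 'a set \<Rightarrow> 'a set" where
  "orth_compl B S = {u. \<forall>z\<in>S. B u z = 0}"

definition levi_civita :: "('a::euclidean_space \<Rightarrow> 'a \<Rightarrow> 'a) \<Rightarrow> ('a \<Rightarrow> 'a \<Rightarrow> real) \<Rightarrow> 'a \<Rightarrow> 'a \<Rightarrow> 'a" where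
  "levi_civita br B u v = (THE x. \<forall>w. 2 * B x w = B (br u v) w + B (br w u) v + B (br w v) u)"

definition curvature :: "('a::euclidean_space \<Rightarrow> 'a \<Rightarrow> 'a) \<Rightarrow> ('a \<Rightarrow> 'a \<Rightarrow> real) \<Rightarrow> 'a \<Rightarrow> 'a \<Rightarrow> 'a \<Rightarrow> 'a" where
  "curvature br B u v w = levi_civita br B (br u v) w
     - (levi_civita br B u (levi_civita br B v w) - levi_civita br B v (levi_civita br B u w))"

definition trace_op :: "('a::euclidean_space \<Rightarrow> 'a) \<Rightarrow> real" where
  "trace_op f = (\<Sum>b\<in>Basis. f b \<bullet> b)"

definition ricci :: "('a::euclidean_space \<Rightarrow> 'a \<Rightarrow> 'a) \<Rightarrow> ('a \<Rightarrow> 'a \<Rightarrow> real) \<Rightarrow> 'a \<Rightarrow> 'a" where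
  "ricci br B u = (THE x. \<forall>v. B x v = trace_op (\<lambda>w. curvature br B u w v))"

definition einstein :: "('a::euclidean_space \<Rightarrow> 'a \<Rightarrow> 'a) \<Rightarrow> ('a \<Rightarrow> 'a \<Rightarrow> real) \<Rightarrow> real \<Rightarrow> bool" where
  "einstein br B lam \<longleftrightarrow> (\<forall>u. ricci br B u = lam *\<^sub>R u)"

text \<open>Decomposition h = g \<oplus> Z(h) with g = Z(h)^perp: Z-component of a vector.\<close>
definition center_part :: "('a::euclidean_space \<Rightarrow> 'a \<Rightarrow> 'a) \<Rightarrow> ('a \<Rightarrow> 'a \<Rightarrow> real) \<Rightarrow> 'a \<Rightarrow> 'a" where
  "center_part br B x = (THE z. z \<in> lie_center br \<and> x - z \<in> orth_compl B (lie_center br))"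

definition bracket_g :: "('a::euclidean_space \<Rightarrow> 'a \<Rightarrow> 'a) \<Rightarrow> ('a \<Rightarrow> 'a \<Rightarrow> real) \<Rightarrow> 'a \<Rightarrow> 'a \<Rightarrow> 'a" where
  "bracket_g br B u v = br u v - center_part br B (br u v)"

definition omega_cocycle :: "('a::euclidean_space \<Rightarrow> 'a \<Rightarrow> 'a) \<Rightarrow> ('a \<Rightarrow> 'a \<Rightarrow> real) \<Rightarrow> 'a \<Rightarrow> 'a \<Rightarrow> 'a" where
  "omega_cocycle br B u v = center_part br B (br u v)"

definition linear_on_set :: "'a set \<Rightarrow> ('a::real_vector \<Rightarrow> 'b::real_vector) \<Rightarrow> bool" where
  "linear_on_set S f \<longleftrightarrow> (\<forall>x\<in>S. \<forall>y\<in>S. f (x + y) = f x + f y) \<and> (\<forall>c. \<forall>x\<in>S. f (c *\<^sub>R x) = c *\<^sub>R f x)"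

end

theory Submission
  imports Defs
begin


lemma trace_add: "trace_op (\<lambda>w. f w + g w) = trace_op f + trace_op g"
  by (simp add: trace_op_def inner_add_left sum.distrib)
lemma trace_diff: "trace_op (\<lambda>w. f w - g w) = trace_op f - trace_op g"
  by (simp add: trace_op_def inner_diff_left sum_subtractf)
lemma trace_neg: "trace_op (\<lambda>w. - f w) = - trace_op f"
  by (simp add: trace_op_def sum_negf)
lemma trace_scale: "trace_op (\<lambda>w. c *\<^sub>R f w) = c * trace_op f"
  by (simp add: trace_op_def sum_distrib_left)
lemma trace_zero: "trace_op (\<lambda>w. 0) = 0"
  by (simp add: trace_op_def)

lemma trace_double:
  assumes "linear f" "linear g"
  shows "trace_op (\<lambda>w. f (g w)) = (\<Sum>b\<in>Basis. \<Sum>c\<in>Basis. (g b \<bullet> c) * (f c \<bullet> b))"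
proof -
  have "f (g b) \<bullet> b = (\<Sum>c\<in>Basis. (g b \<bullet> c) * (f c \<bullet> b))" for b
  proof -
    have "f (g b) = f (\<Sum>c\<in>Basis. (g b \<bullet> c) *\<^sub>R c)" by (simp add: euclidean_representation)
    also have "\<dots> = (\<Sum>c\<in>Basis. (g b \<bullet> c) *\<^sub>R f c)"
      using assms(1) by (simp add: real_vector.linear_sum linear_scale)
    finally show ?thesis by (simp add: inner_sum_left)
  qed
  then show ?thesis by (simp add: trace_op_def)
qed

lemma trace_comm:
  assumes "linear f" "linear g"
  shows "trace_op (\<lambda>w. f (g w)) = trace_op (\<lambda>w. g (f w))"
  unfolding trace_double[OF assms] trace_double[OF assms(2,1)]
  by (subst sum.swap) (simp add: mult.commute)

lemma trace_adjoint:
  assumes "linear f"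
  shows "trace_op (adjoint f) = trace_op f"
  unfolding trace_op_def
  by (metis adjoint_works assms inner_commute)

definition projS :: "'a::euclidean_space set \<Rightarrow> 'a \<Rightarrow> 'a" where
  "projS S x = (SOME p. p \<in> S \<and> (\<forall>s\<in>S. (x - p) \<bullet> s = 0))"

lemma projS_ex:
  assumes "subspace S"
  shows "projS S x \<in> S \<and> (\<forall>s\<in>S. (x - projS S x) \<bullet> s = 0)"
proof -
  obtain y z where "y \<in> span S" "\<And>w. w \<in> span S \<Longrightarrow> orthogonal z w" "x = y + z"
    using orthogonal_subspace_decomp_exists by blast
  moreover have "span S = S" using assms by (simp add: span_eq_iff)
  ultimately have "\<exists>p. p \<in> S \<and> (\<forall>s\<in>S. (x - p) \<bullet> s = 0)"
    by (intro exI[of _ y]) (auto simp: orthogonal_def)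
  then show ?thesis unfolding projS_def by (rule someI_ex)
qed

lemma projS_unique:
  assumes "subspace S" "p \<in> S" "\<forall>s\<in>S. (x - p) \<bullet> s = 0"
  shows "projS S x = p"
proof -
  have q: "projS S x \<in> S" "\<forall>s\<in>S. (x - projS S x) \<bullet> s = 0" using projS_ex[OF assms(1)] by auto
  have d: "projS S x - p \<in> S" using q(1) assms(2) assms(1) by (simp add: subspace_diff)
  have "(projS S x - p) \<bullet> (projS S x - p) = (x - p) \<bullet> (projS S x - p) - (x - projS S x) \<bullet> (projS S x - p)"
    by (simp add: inner_diff_left)
  also have "\<dots> = 0" using d q assms(3) by simp
  finally show ?thesis by simp
qed

lemma projS_in: "subspace S \<Longrightarrow> projS S x \<in> S" using projS_ex by blast
lemma projS_orth: "subspace S \<Longrightarrow> s \<in> S \<Longrightarrow> (x - projS S x) \<bullet> s = 0" using projS_ex by blast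
lemma projS_id: "subspace S \<Longrightarrow> x \<in> S \<Longrightarrow> projS S x = x"
  by (rule projS_unique) auto
lemma projS_perp: "subspace S \<Longrightarrow> \<forall>s\<in>S. x \<bullet> s = 0 \<Longrightarrow> projS S x = 0"
  by (rule projS_unique) (auto simp: subspace_0)

lemma projS_linear:
  assumes "subspace S"
  shows "linear (projS S)"
proof (rule linearI)
  fix x y
  show "projS S (x + y) = projS S x + projS S y"
  proof (rule projS_unique[OF assms])
    show "projS S x + projS S y \<in> S" using projS_in[OF assms] by (simp add: subspace_add[OF assms])
    show "\<forall>s\<in>S. (x + y - (projS S x + projS S y)) \<bullet> s = 0"
    proof
      fix s assume s: "s \<in> S"
      have "x + y - (projS S x + projS S y) = (x - projS S x) + (y - projS S y)" by simp
      then show "(x + y - (projS S x + projS S y)) \<bullet> s = 0"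
        using projS_orth[OF assms s, of x] projS_orth[OF assms s, of y] by (simp only: inner_add_left)
    qed
  qed
next
  fix c x
  show "projS S (c *\<^sub>R x) = c *\<^sub>R projS S x"
  proof (rule projS_unique[OF assms])
    show "c *\<^sub>R projS S x \<in> S" using projS_in[OF assms] assms by (simp add: subspace_scale)
    show "\<forall>s\<in>S. (c *\<^sub>R x - c *\<^sub>R projS S x) \<bullet> s = 0"
      using projS_orth[OF assms, of _ x]
      by (metis inner_scaleR_left mult_zero_right scaleR_right_diff_distrib)
  qed
qed

lemma trace_filtration:
  fixes f :: "'a::euclidean_space \<Rightarrow> 'a" and C :: "nat \<Rightarrow> 'a set"
  assumes lin: "linear f"
    and sub: "\<And>j. subspace (C j)"
    and C0: "C 0 = UNIV" and Ck: "C k = {0}"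
    and dec: "\<And>j. C (Suc j) \<subseteq> C j"
    and fC: "\<And>j x. x \<in> C j \<Longrightarrow> f x \<in> C (Suc j)"
  shows "trace_op f = 0"
proof -
  define Q where "Q j = projS (C j)" for j
  have Qlin: "linear (Q j)" for j unfolding Q_def by (rule projS_linear[OF sub])
  have step: "trace_op (\<lambda>w. Q j (f w)) = trace_op (\<lambda>w. Q (Suc j) (f w))" for j
  proof -
    define P where "P x = Q j x - Q (Suc j) x" for x
    have Plin: "linear P" unfolding P_def using Qlin by (intro linear_compose_sub) auto
    have PC: "P x \<in> C j" for x
      unfolding P_def Q_def using projS_in[OF sub] dec sub by (meson subsetD subspace_diff)
    have Pkill: "P c = 0" if "c \<in> C (Suc j)" for c
      unfolding P_def Q_def using that dec projS_id[OF sub] by auto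
    have QQ: "Q (Suc j) (Q j x) = Q (Suc j) x" for x
    proof -
      have "Q (Suc j) (x - Q j x) = 0"
        unfolding Q_def using dec projS_orth[OF sub, of _ j x] by (intro projS_perp[OF sub]) auto
      then show ?thesis using Qlin by (simp add: linear_diff)
    qed
    have PP: "P (P x) = P x" for x
    proof -
      have "Q j (P x) = P x" unfolding Q_def using PC projS_id[OF sub] by blast
      moreover have "Q (Suc j) (Q (Suc j) x) = Q (Suc j) x"
        unfolding Q_def using projS_id[OF sub] projS_in[OF sub] by blast
      moreover have "Q (Suc j) (P x) = 0"
        using QQ Qlin calculation(2) unfolding P_def by (simp add: linear_diff)
      ultimately show ?thesis by (simp add: P_def)
    qed
    have "trace_op (\<lambda>w. P (f w)) = trace_op (\<lambda>w. P (P (f w)))" by (simp add: PP)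
    also have "\<dots> = trace_op (\<lambda>w. P (f (P w)))"
      using trace_comm[OF Plin, of "\<lambda>w. P (f w)"] Plin lin by (simp add: linear_compose[unfolded o_def])
    also have "\<dots> = 0" using Pkill fC PC by (simp add: trace_zero)
    finally show ?thesis unfolding P_def by (simp add: trace_diff)
  qed
  have eq: "trace_op (\<lambda>w. Q 0 (f w)) = trace_op (\<lambda>w. Q m (f w))" for m
    by (induction m) (use step in auto)
  have Q0: "Q 0 x = x" for x unfolding Q_def by (rule projS_id[OF sub]) (simp add: C0)
  have Qk: "Q k x = 0" for x unfolding Q_def using projS_in[OF sub, of k] Ck by simp
  have "trace_op f = trace_op (\<lambda>w. Q 0 (f w))" using Q0 by simp
  also have "\<dots> = trace_op (\<lambda>w. Q k (f w))" by (rule eq)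
  also have "\<dots> = 0" using Qk by (simp add: trace_op_def)
  finally show ?thesis .
qed




locale LA =
  fixes br :: "'a::euclidean_space \<Rightarrow> 'a \<Rightarrow> 'a" and B :: "'a \<Rightarrow> 'a \<Rightarrow> real"
  assumes brbil: "bilinear br" and bralt: "\<And>x. br x x = 0"
    and Bbil: "bilinear B" and Bsym: "\<And>x y. B x y = B y x"
    and nondeg: "\<And>x. (\<And>y. B x y = 0) \<Longrightarrow> x = 0"
begin

lemmas br_simps[simp] = bilinear_ladd[OF brbil] bilinear_radd[OF brbil] bilinear_lmul[OF brbil]
  bilinear_rmul[OF brbil] bilinear_lneg[OF brbil] bilinear_rneg[OF brbil]
  bilinear_lzero[OF brbil] bilinear_rzero[OF brbil] bilinear_lsub[OF brbil] bilinear_rsub[OF brbil]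
lemmas B_simps[simp] = bilinear_ladd[OF Bbil] bilinear_radd[OF Bbil] bilinear_lmul[OF Bbil]
  bilinear_rmul[OF Bbil] bilinear_lneg[OF Bbil] bilinear_rneg[OF Bbil]
  bilinear_lzero[OF Bbil] bilinear_rzero[OF Bbil] bilinear_lsub[OF Bbil] bilinear_rsub[OF Bbil]

lemma br_anti: "br y x = - br x y"
proof -
  have "br (x + y) (x + y) = 0" by (rule bralt)
  then show ?thesis using bralt[of x] bralt[of y] by (simp add: eq_neg_iff_add_eq_0 add.commute)
qed

lemma Beq: assumes "\<And>w. B x w = B x' w" shows "x = x'"
proof -
  have "x - x' = 0" by (rule nondeg) (simp add: assms)
  then show ?thesis by simp
qed

lemma B_rsum: "B x (\<Sum>c\<in>S. f c) = (\<Sum>c\<in>S. B x (f c))"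
  using Bbil unfolding bilinear_def by (simp add: real_vector.linear_sum)

definition H :: "'a \<Rightarrow> 'a" where "H x = (\<Sum>c\<in>Basis. B x c *\<^sub>R c)"

lemma H_inner: "H x \<bullet> y = B x y"
proof -
  have "B x y = B x (\<Sum>c\<in>Basis. (y \<bullet> c) *\<^sub>R c)" by (simp add: euclidean_representation)
  also have "\<dots> = (\<Sum>c\<in>Basis. (y \<bullet> c) * B x c)" by (simp add: B_rsum)
  moreover have "H x \<bullet> y = (\<Sum>c\<in>Basis. B x c * (c \<bullet> y))" by (simp add: H_def inner_sum_left)
  ultimately show ?thesis by (simp add: inner_commute mult.commute)
qed

lemma H_linear: "linear H"
  by (rule linearI) (simp_all add: H_def scaleR_add_left sum.distrib scaleR_sum_right)

lemma H_inj: "inj H"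
proof (rule injI)
  fix x y assume "H x = H y"
  then have "B x w = B y w" for w by (metis H_inner)
  then show "x = y" by (rule Beq)
qed

lemma H_surj: "surj H" using H_linear H_inj by (rule eucl.linear_inj_imp_surj)

lemma rep: assumes "linear \<phi>" shows "\<exists>y. \<forall>x. B y x = \<phi> x"
proof -
  define p where "p = (\<Sum>c\<in>Basis. \<phi> c *\<^sub>R c)"
  have p: "p \<bullet> x = \<phi> x" for x
  proof -
    have "\<phi> x = \<phi> (\<Sum>c\<in>Basis. (x \<bullet> c) *\<^sub>R c)" by (simp add: euclidean_representation)
    also have "\<dots> = (\<Sum>c\<in>Basis. (x \<bullet> c) * \<phi> c)" using assms by (simp add: real_vector.linear_sum linear_scale)
    moreover have "p \<bullet> x = (\<Sum>c\<in>Basis. \<phi> c * (c \<bullet> x))" by (simp add: p_def inner_sum_left)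
    ultimately show ?thesis by (simp add: inner_commute mult.commute)
  qed
  obtain y where "H y = p" using H_surj by (metis surjD)
  then show ?thesis using p H_inner by metis
qed

lemma trace_transpose:
  assumes "linear M" "linear N" "\<And>a b. B (M a) b = B a (N b)"
  shows "trace_op N = trace_op M"
proof -
  obtain g where g: "linear g" "g \<circ> H = id" using linear_injective_left_inverse[OF H_linear H_inj] by blast
  have gH: "g (H x) = x" for x using g(2) by (metis comp_apply id_apply)
  have Hg: "H (g x) = x" for x using H_surj gH by (metis surjD)
  have linHN: "linear (\<lambda>w. H (N w))" using H_linear assms(2) by (simp add: linear_compose[unfolded o_def])
  have "trace_op N = trace_op (\<lambda>w. g (H (N w)))" by (simp add: gH)
  also have "\<dots> = trace_op (\<lambda>w. H (N (g w)))" by (rule trace_comm[OF g(1) linHN])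
  also have "\<dots> = (\<Sum>b\<in>Basis. B (N (g b)) b)" by (simp add: trace_op_def H_inner)
  also have "\<dots> = (\<Sum>b\<in>Basis. B (M b) (g b))" by (simp add: Bsym assms(3))
  also have "\<dots> = (\<Sum>b\<in>Basis. H (g b) \<bullet> M b)" by (simp add: Bsym H_inner)
  also have "\<dots> = trace_op M" by (simp add: Hg trace_op_def inner_commute)
  finally show ?thesis .
qed

definition L where "L = levi_civita br B"

lemma LC: "2 * B (L u v) w = B (br u v) w + B (br w u) v + B (br w v) u"
proof -
  have "linear (\<lambda>w. (B (br u v) w + B (br w u) v + B (br w v) u) / 2)"
    by (rule linearI) (simp_all add: field_simps)
  then obtain y where y: "\<forall>w. B y w = (B (br u v) w + B (br w u) v + B (br w v) u) / 2"
    using rep by blast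
  have ex: "\<forall>w. 2 * B y w = B (br u v) w + B (br w u) v + B (br w v) u" using y by (auto simp: field_simps)
  have "\<forall>w. 2 * B (L u v) w = B (br u v) w + B (br w u) v + B (br w v) u"
    unfolding L_def levi_civita_def
  proof (rule theI[where a=y])
    show "\<forall>w. 2 * B y w = B (br u v) w + B (br w u) v + B (br w v) u" by (rule ex)
    fix x assume "\<forall>w. 2 * B x w = B (br u v) w + B (br w u) v + B (br w v) u"
    then have "B x w = B y w" for w using ex by (metis mult_left_cancel zero_neq_numeral)
    then show "x = y" by (rule Beq)
  qed
  then show ?thesis by blast
qed

lemma LC': "B (L u v) w = (B (br u v) w + B (br w u) v + B (br w v) u) / 2"
  using LC[of u v w] by simp

lemma L_radd[simp]: "L u (v + v') = L u v + L u v'"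
  by (rule Beq) (simp add: LC' field_simps)
lemma L_rscale[simp]: "L u (c *\<^sub>R v) = c *\<^sub>R L u v"
  by (rule Beq) (simp add: LC' field_simps)
lemma L_rneg[simp]: "L u (- v) = - L u v"
  by (rule Beq) (simp add: LC' field_simps)
lemma L_rdiff[simp]: "L u (v - v') = L u v - L u v'"
  by (rule Beq) (simp add: LC' field_simps)
lemma L_lzero[simp]: "L 0 v = 0"
  by (rule Beq) (simp add: LC')
lemma L_linear: "linear (L u)"
  by (rule linearI) simp_all

lemma torsion: "L w y = L y w + br w y"
  by (rule Beq) (simp add: LC' field_simps br_anti[of w y])

lemma L_skew: "B (L x a) b = B a (- L x b)"
proof -
  have "B (L x a) b + B (L x b) a = 0"
    unfolding LC' using br_anti[of x a] br_anti[of x b] br_anti[of b a] by (simp add: field_simps)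
  then show ?thesis by (simp add: Bsym[of a] eq_neg_iff_add_eq_0)
qed

lemma trace_L: "trace_op (L x) = 0"
proof -
  have "trace_op (\<lambda>w. - L x w) = trace_op (L x)"
    by (rule trace_transpose[OF L_linear]) (simp_all add: L_skew linear_compose_neg L_linear)
  then show ?thesis by (simp add: trace_neg)
qed

definition K where "K = curvature br B"

lemma K_def': "K u w v = L (br u w) v - (L u (L w v) - L w (L u v))"
  by (simp add: K_def curvature_def L_def)

lemma ricci_char: "B (ricci br B u) v = trace_op (\<lambda>w. K u w v)"
proof -
  have lin: "linear (\<lambda>v. trace_op (\<lambda>w. K u w v))"
    by (rule linearI) (simp_all add: K_def' algebra_simps trace_add trace_diff trace_scale
       flip: scaleR_diff_right)
  obtain y where y: "\<forall>v. B y v = trace_op (\<lambda>w. K u w v)" using rep[OF lin] by blast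
  have "\<forall>v. B (ricci br B u) v = trace_op (\<lambda>w. curvature br B u w v)"
    unfolding ricci_def
  proof (rule theI[where a=y])
    show "\<forall>v. B y v = trace_op (\<lambda>w. curvature br B u w v)" using y by (simp add: K_def)
    fix x assume "\<forall>v. B x v = trace_op (\<lambda>w. curvature br B u w v)"
    then show "x = y" using y by (intro Beq) (simp add: K_def)
  qed
  then show ?thesis by (simp add: K_def)
qed

lemma key:
  assumes z: "\<And>x. br z x = 0" and y: "\<And>a b. B y (br a b) = 0"
    and unimod: "\<And>x. trace_op (\<lambda>w. br w x) = 0"
  shows "trace_op (\<lambda>w. K z w y) = 0"
proof -
  define x where "x = L z y"
  define J where "J = L z"
  define A where "A = br y"
  have Jlin: "linear J" unfolding J_def by (rule L_linear)
  have Alin: "linear A" unfolding A_def using brbil by (simp add: bilinear_def)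
  have Kexp: "K z w y = - J (L y w) + J (A w) + L x w + br w x" for w
  proof -
    have "K z w y = - (L z (L w y) - L w (L z y))" by (simp add: K_def' z)
    also have "\<dots> = - L z (L y w + br w y) + (L x w + br w x)"
      by (simp add: torsion[of w y] torsion[of w "L z y"] x_def)
    also have "\<dots> = - J (L y w) + J (A w) + L x w + br w x"
      by (simp add: J_def A_def br_anti[of w y])
    finally show ?thesis .
  qed
  have JA: "trace_op (\<lambda>w. J (L y w)) = trace_op (\<lambda>w. J (A w))"
  proof -
    define R where "R w = 2 *\<^sub>R L y w - A w" for w
    have Rlin: "linear R" unfolding R_def A_def
      by (rule linearI) (simp_all add: algebra_simps)
    have RB: "B (R a) c = - B a (A c)" for a c
    proof -
      have "B (R a) c = B (br c y) a + B (br c a) y"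
        unfolding R_def A_def using LC[of y a c] by (simp add: algebra_simps)
      also have "\<dots> = - B a (A c)"
        using y[of c a] by (simp add: Bsym[of _ a] Bsym[of _ y] A_def br_anti[of c y])
      finally show ?thesis .
    qed
    have JB: "B (J a) c = - B a (J c)" for a c unfolding J_def using L_skew by simp
    have "trace_op (\<lambda>w. A (J w)) = trace_op (\<lambda>w. J (R w))"
    proof (rule trace_transpose)
      show "linear (\<lambda>w. J (R w))" using Jlin Rlin by (simp add: linear_compose[unfolded o_def])
      show "linear (\<lambda>w. A (J w))" using Jlin Alin by (simp add: linear_compose[unfolded o_def])
      show "B (J (R a)) b = B a (A (J b))" for a b by (simp add: JB RB)
    qed
    also have "\<dots> = 2 * trace_op (\<lambda>w. J (L y w)) - trace_op (\<lambda>w. J (A w))"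
      using Jlin by (simp add: R_def linear_diff linear_scale trace_diff trace_scale)
    finally have "trace_op (\<lambda>w. A (J w)) = 2 * trace_op (\<lambda>w. J (L y w)) - trace_op (\<lambda>w. J (A w))" .
    moreover have "trace_op (\<lambda>w. A (J w)) = trace_op (\<lambda>w. J (A w))" by (rule trace_comm[OF Alin Jlin])
    ultimately show ?thesis by simp
  qed
  have "trace_op (\<lambda>w. K z w y) = - trace_op (\<lambda>w. J (L y w)) + trace_op (\<lambda>w. J (A w)) + trace_op (L x) + trace_op (\<lambda>w. br w x)"
    by (simp add: Kexp trace_add trace_neg trace_diff)
  also have "\<dots> = 0" by (simp add: JA trace_L unimod)
  finally show ?thesis .
qed

end



lemma lorentzian_nondeg:
  assumes "lorentzian B" "\<And>y. B x y = 0"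
  shows "x = (0::'a::euclidean_space)"
proof -
  obtain T :: "'a \<Rightarrow> 'a" and b0 where T: "linear T" "bij T" "b0 \<in> Basis"
    and TB: "\<And>x y. B (T x) (T y) = x \<bullet> y - 2 * (x \<bullet> b0) * (y \<bullet> b0)"
    using assms(1) unfolding lorentzian_def by blast
  obtain x' where x': "x = T x'" using T(2) by (metis bij_pointE)
  define y' where "y' = x' - (2 * (x' \<bullet> b0)) *\<^sub>R b0"
  have bb: "b0 \<bullet> b0 = 1" using T(3) by simp
  have "B (T x') (T y') = x' \<bullet> x'"
    unfolding TB y'_def using bb by (simp add: inner_diff_right inner_diff_left algebra_simps power2_eq_square)
  then have "x' \<bullet> x' = 0" using assms(2) x' by simp
  then have "x' = 0" by simp
  then show ?thesis using x' T(1) by (simp add: linear_0)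
qed

lemma anti:
  assumes "bilinear br" "\<And>x. br x x = 0"
  shows "br y x = - br x (y::'a::real_vector)"
proof -
  have "br (x + y) (x + y) = 0" by (rule assms(2))
  then show ?thesis using assms(2)[of x] assms(2)[of y]
    by (simp add: bilinear_ladd[OF assms(1)] bilinear_radd[OF assms(1)] eq_neg_iff_add_eq_0 add.commute)
qed

lemma lower_central_sub: "subspace (lower_central br j)"
  by (cases j) (simp_all add: subspace_UNIV subspace_span)

lemma lower_central_dec: "lower_central br (Suc j) \<subseteq> lower_central br j"
proof (induction j)
  case 0 then show ?case by simp
next
  case (Suc j)
  have "{br x y | x y. y \<in> lower_central br (Suc j)} \<subseteq> {br x y | x y. y \<in> lower_central br j}"
    using Suc by blast
  then show ?case by (simp only: lower_central.simps) (rule span_mono)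
qed

lemma unimodular:
  assumes "nilpotent_lie br"
  shows "trace_op (\<lambda>w. br w x) = 0"
proof -
  have lie: "bilinear br" "\<And>x. br x x = 0" using assms unfolding nilpotent_lie_def lie_algebra_def by auto
  obtain k where k: "lower_central br k = {0}" using assms unfolding nilpotent_lie_def by blast
  have "trace_op (br x) = 0"
  proof (rule trace_filtration[where C="lower_central br" and k=k])
    show "linear (br x)" using lie(1) by (simp add: bilinear_def)
    show "subspace (lower_central br j)" for j by (rule lower_central_sub)
    show "lower_central br 0 = UNIV" by simp
    show "lower_central br k = {0}" by (rule k)
    show "lower_central br (Suc j) \<subseteq> lower_central br j" for j by (rule lower_central_dec)
    show "br x y \<in> lower_central br (Suc j)" if "y \<in> lower_central br j" for j y
      using that by (auto intro!: span_base)
  qed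
  then show ?thesis by (simp add: anti[OF lie, of _ x] trace_neg)
qed

lemma center_nonzero:
  assumes "nilpotent_lie br"
  shows "\<exists>z. z \<noteq> (0::'a::euclidean_space) \<and> z \<in> lie_center br"
proof -
  have lie: "bilinear br" "\<And>x. br x x = 0" using assms unfolding nilpotent_lie_def lie_algebra_def by auto
  obtain k where k: "lower_central br k = {0}" using assms unfolding nilpotent_lie_def by blast
  define m where "m = (LEAST k. lower_central br k = {0})"
  have m: "lower_central br m = {0}" unfolding m_def using k by (rule LeastI)
  obtain b :: 'a where b: "b \<in> Basis" using nonempty_Basis by blast
  then have "b \<noteq> 0" by auto
  have "m \<noteq> 0"
  proof
    assume "m = 0"
    then have "(UNIV::'a set) = {0}" using m by simp
    then show False using \<open>b \<noteq> 0\<close> by (metis UNIV_I singletonD)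
  qed
  then obtain j where j: "m = Suc j" using not0_implies_Suc by blast
  have "j < m" using j by simp
  then have "\<not> lower_central br j = {0}" unfolding m_def by (rule not_less_Least)
  moreover have "0 \<in> lower_central br j" using lower_central_sub subspace_0 by blast
  ultimately obtain z where z: "z \<in> lower_central br j" "z \<noteq> 0" by blast
  have "br x z \<in> lower_central br (Suc j)" for x using z by (auto intro!: span_base)
  then have "br x z = 0" for x using m j by simp
  then have "br z x = 0" for x by (simp add: anti[OF lie, of z x])
  then show ?thesis using z unfolding lie_center_def by auto
qed




theorem proposition3p4:
  fixes br :: "'a::euclidean_space \<Rightarrow> 'a \<Rightarrow> 'a"
    and B :: "'a \<Rightarrow> 'a \<Rightarrow> real"
    and lam :: real
  assumes "nilpotent_lie br"
    and "lorentzian B"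
    and "nondegenerate_on B (lie_center br)"
    and "einstein br B lam"
    and "lam \<noteq> 0"
  shows "\<not> (\<exists>\<alpha>. linear_on_set (orth_compl B (lie_center br)) \<alpha> \<and>
              (\<forall>u\<in>orth_compl B (lie_center br). \<alpha> u \<in> lie_center br) \<and>
              (\<forall>u\<in>orth_compl B (lie_center br). \<forall>v\<in>orth_compl B (lie_center br).
                 omega_cocycle br B u v = - \<alpha> (bracket_g br B u v)))"
proof
  assume "\<exists>\<alpha>. linear_on_set (orth_compl B (lie_center br)) \<alpha> \<and>
              (\<forall>u\<in>orth_compl B (lie_center br). \<alpha> u \<in> lie_center br) \<and>
              (\<forall>u\<in>orth_compl B (lie_center br). \<forall>v\<in>orth_compl B (lie_center br).
                 omega_cocycle br B u v = - \<alpha> (bracket_g br B u v))"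
  then obtain \<alpha> where H: "linear_on_set (orth_compl B (lie_center br)) \<alpha> \<and>
              (\<forall>u\<in>orth_compl B (lie_center br). \<alpha> u \<in> lie_center br) \<and>
              (\<forall>u\<in>orth_compl B (lie_center br). \<forall>v\<in>orth_compl B (lie_center br).
                 omega_cocycle br B u v = - \<alpha> (bracket_g br B u v))" ..
  have alin: "linear_on_set (orth_compl B (lie_center br)) \<alpha>" using H by (rule conjunct1)
  have aZ: "\<forall>u\<in>orth_compl B (lie_center br). \<alpha> u \<in> lie_center br"
    using H by (rule conjunct2[THEN conjunct1])
  have aom: "\<forall>u\<in>orth_compl B (lie_center br). \<forall>v\<in>orth_compl B (lie_center br).
                 omega_cocycle br B u v = - \<alpha> (bracket_g br B u v)"
    using H by (rule conjunct2[THEN conjunct2])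
  define Z where "Z = lie_center br"
  define N where "N = orth_compl B Z"
  define cp where "cp = center_part br B"
  have lie0: "bilinear br \<and> (\<forall>x. br x x = 0)" using assms(1) unfolding nilpotent_lie_def lie_algebra_def by blast
  have lie: "bilinear br" "\<And>x. br x x = 0" using lie0 by auto
  have Bl0: "bilinear B \<and> (\<forall>x y. B x y = B y x)" using assms(2) unfolding lorentzian_def by blast
  have Bl: "bilinear B" "\<And>x y. B x y = B y x" using Bl0 by auto
  interpret LA br B
    proof
    show "bilinear br" "\<And>x. br x x = 0" "bilinear B" "\<And>x y. B x y = B y x" by (fact lie Bl)+
    show "\<And>x. (\<And>y. B x y = 0) \<Longrightarrow> x = 0" by (rule lorentzian_nondeg[OF assms(2)])
  qed
  have ndZ: "\<And>z. z \<in> Z \<Longrightarrow> (\<And>w. w \<in> Z \<Longrightarrow> B z w = 0) \<Longrightarrow> z = 0"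
    using assms(3) unfolding nondegenerate_on_def Z_def by blast
  have Zsub: "subspace Z" unfolding Z_def lie_center_def subspace_def by simp
  have Nsub: "subspace N" unfolding N_def orth_compl_def subspace_def by simp
  have ZN0: "x = 0" if "x \<in> Z" "x \<in> N" for x
    using that(1) by (rule ndZ) (use that(2) in \<open>simp add: N_def orth_compl_def\<close>)
  define \<Phi> where "\<Phi> z = projS Z (H z)" for z
  have \<Phi>lin: "linear \<Phi>" unfolding \<Phi>_def
    using linear_compose[OF H_linear projS_linear[OF Zsub]] by (simp add: o_def)
  have \<Phi>0: "B x s = 0" if "\<Phi> x = 0" "s \<in> Z" for x s
    using projS_orth[OF Zsub that(2), of "H x"] that(1) by (simp add: \<Phi>_def H_inner)
  have "inj_on \<Phi> Z"
  proof (rule inj_onI)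
    fix x y assume xy: "x \<in> Z" "y \<in> Z" "\<Phi> x = \<Phi> y"
    then have "\<Phi> (x - y) = 0" using \<Phi>lin by (simp add: linear_diff)
    moreover have "x - y \<in> Z" using xy Zsub by (simp add: subspace_diff)
    ultimately have "x - y = 0" using \<Phi>0 ndZ by blast
    then show "x = y" by simp
  qed
  moreover have spZ: "span Z = Z" by (rule span_eq_iff[THEN iffD2, OF Zsub])
  ultimately have injs: "inj_on \<Phi> (span Z)" by (simp only:)
  have "dim (\<Phi> ` Z) = dim Z" by (rule eucl.dim_image_eq[OF \<Phi>lin injs])
  moreover have "\<Phi> ` Z \<subseteq> Z" unfolding \<Phi>_def using projS_in[OF Zsub] by auto
  moreover have "subspace (\<Phi> ` Z)" using \<Phi>lin Zsub by (rule linear_subspace_image)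
  ultimately have \<Phi>Z: "\<Phi> ` Z = Z" using Zsub by (intro subspace_dim_equal) auto
  have dec: "\<exists>z\<in>Z. x - z \<in> N" for x
  proof -
    have "\<Phi> x \<in> Z" unfolding \<Phi>_def using projS_in[OF Zsub] by auto
    then obtain z where z: "z \<in> Z" "\<Phi> z = \<Phi> x" using \<Phi>Z by (metis imageE)
    then have "\<Phi> (x - z) = 0" using \<Phi>lin by (simp add: linear_diff)
    then have "x - z \<in> N" using \<Phi>0 unfolding N_def orth_compl_def by blast
    then show ?thesis using z by blast
  qed
  have cp_unique: "cp x = z" if "z \<in> Z" "x - z \<in> N" for x z
  proof -
    have uq: "z' = z" if "z' \<in> Z" "x - z' \<in> N" for z'
    proof -
      have "z' - z \<in> Z" using that \<open>z \<in> Z\<close> Zsub by (simp add: subspace_diff)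
      moreover have "z' - z \<in> N" using subspace_diff[OF Nsub \<open>x - z \<in> N\<close> that(2)] by simp
      ultimately have "z' - z = 0" by (rule ZN0)
      then show ?thesis by simp
    qed
    show ?thesis unfolding cp_def center_part_def Z_def[symmetric] N_def[symmetric]
      by (rule the_equality) (use that uq in blast)+
  qed
  have cpZ: "cp x \<in> Z" and cpN: "x - cp x \<in> N" for x
  proof -
    obtain z where "z \<in> Z" "x - z \<in> N" using dec by blast
    then have "cp x = z" by (rule cp_unique)
    then show "cp x \<in> Z" "x - cp x \<in> N" using \<open>z \<in> Z\<close> \<open>x - z \<in> N\<close> by auto
  qed
  have cp_add: "cp (x + x') = cp x + cp x'" for x x'
  proof (rule cp_unique)
    show "cp x + cp x' \<in> Z" using cpZ Zsub by (simp add: subspace_add)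
    have "(x - cp x) + (x' - cp x') \<in> N" using cpN Nsub by (simp add: subspace_add)
    moreover have "(x - cp x) + (x' - cp x') = x + x' - (cp x + cp x')" by (simp add: algebra_simps)
    ultimately show "x + x' - (cp x + cp x') \<in> N" by simp
  qed
  have cp_scale: "cp (c *\<^sub>R x) = c *\<^sub>R cp x" for c x
  proof (rule cp_unique)
    show "c *\<^sub>R cp x \<in> Z" using cpZ Zsub by (simp add: subspace_scale)
    show "c *\<^sub>R x - c *\<^sub>R cp x \<in> N" using subspace_scale[OF Nsub cpN[of x], of c]
      by (simp add: scaleR_diff_right)
  qed
  have aadd: "\<alpha> (u + v) = \<alpha> u + \<alpha> v" if "u \<in> N" "v \<in> N" for u v
    using alin that unfolding linear_on_set_def N_def Z_def by blast
  have ascale: "\<alpha> (c *\<^sub>R u) = c *\<^sub>R \<alpha> u" if "u \<in> N" for c u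
    using alin that unfolding linear_on_set_def N_def Z_def by blast
  have a0: "\<alpha> 0 = 0" using ascale[of 0 0] Nsub by (simp add: subspace_0)
  have brg: "\<exists>g\<in>N. br a b = g - \<alpha> g" for a b
  proof -
    define n where "n = a - cp a"
    define m where "m = b - cp b"
    have nN: "n \<in> N" and mN: "m \<in> N" using cpN n_def m_def by auto
    have c1: "br (cp a) x = 0" for x
      using cpZ[of a] unfolding Z_def lie_center_def by simp
    have c2: "br x (cp b) = 0" for x
    proof -
      have "br (cp b) x = 0" using cpZ[of b] unfolding Z_def lie_center_def by simp
      then show ?thesis by (simp add: br_anti[of "cp b" x])
    qed
    have e1: "br a b = br n m" unfolding n_def m_def by (simp add: c1 c2)
    have e2: "br n m = bracket_g br B n m + omega_cocycle br B n m"
      by (simp add: bracket_g_def omega_cocycle_def)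
    have e3: "omega_cocycle br B n m = - \<alpha> (bracket_g br B n m)"
      using aom nN mN unfolding N_def Z_def by blast
    have gN: "bracket_g br B n m \<in> N" using cpN[of "br n m"] by (simp add: bracket_g_def cp_def)
    show ?thesis using e1 e2 e3 gN by (intro bexI[of _ "bracket_g br B n m"]) simp_all
  qed
  have orth: "B z y = 0" if "z \<in> Z" "\<And>a b. B y (br a b) = 0" for z y
  proof -
    have zc: "br z x = 0" for x using that(1) unfolding Z_def lie_center_def by blast
    have "B (ricci br B z) y = trace_op (\<lambda>w. K z w y)" by (rule ricci_char)
    also have "\<dots> = 0" by (rule key[OF zc that(2) unimodular[OF assms(1)]])
    finally have r: "B (ricci br B z) y = 0" .
    have "ricci br B z = lam *\<^sub>R z" using assms(4) unfolding einstein_def by blast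
    then have "lam * B z y = 0" using r by simp
    then show ?thesis using assms(5) by simp
  qed
  obtain z where z: "z \<noteq> 0" "z \<in> Z" using center_nonzero[OF assms(1)] Z_def by blast
  obtain z2 where z2: "z2 \<in> Z" "B z z2 \<noteq> 0" using ndZ[OF z(2)] z(1) by blast
  define \<phi> where "\<phi> x = B z2 (\<alpha> (x - cp x) + cp x)" for x
  have \<phi>lin: "linear \<phi>"
  proof (rule linearI)
    fix x x'
    have e: "x + x' - cp (x + x') = (x - cp x) + (x' - cp x')" unfolding cp_add by (simp add: algebra_simps)
    have A: "\<alpha> (x + x' - cp (x + x')) = \<alpha> (x - cp x) + \<alpha> (x' - cp x')"
      unfolding e by (rule aadd[OF cpN cpN])
    have "\<phi> (x + x') = B z2 (\<alpha> (x - cp x) + \<alpha> (x' - cp x') + cp (x + x'))"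
      unfolding \<phi>_def A ..
    also have "\<dots> = \<phi> x + \<phi> x'" unfolding \<phi>_def cp_add by (simp add: algebra_simps)
    finally show "\<phi> (x + x') = \<phi> x + \<phi> x'" .
  next
    fix c x
    have e: "c *\<^sub>R x - cp (c *\<^sub>R x) = c *\<^sub>R (x - cp x)" unfolding cp_scale by (simp add: scaleR_diff_right)
    have A: "\<alpha> (c *\<^sub>R x - cp (c *\<^sub>R x)) = c *\<^sub>R \<alpha> (x - cp x)"
      unfolding e by (rule ascale[OF cpN])
    have "\<phi> (c *\<^sub>R x) = B z2 (c *\<^sub>R \<alpha> (x - cp x) + cp (c *\<^sub>R x))"
      unfolding \<phi>_def A ..
    also have "\<dots> = c *\<^sub>R \<phi> x" unfolding \<phi>_def cp_scale by (simp add: algebra_simps)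
    finally show "\<phi> (c *\<^sub>R x) = c *\<^sub>R \<phi> x" .
  qed
  obtain y where y: "\<And>x. B y x = \<phi> x" using rep[OF \<phi>lin] by blast
  have yb: "B y (br a b) = 0" for a b
  proof -
    obtain g where g: "g \<in> N" "br a b = g - \<alpha> g" using brg by blast
    have agZ: "\<alpha> g \<in> Z" using aZ g(1) unfolding N_def Z_def by blast
    have cpf: "cp (g - \<alpha> g) = - \<alpha> g"
      using g(1) agZ Zsub by (intro cp_unique) (auto simp: subspace_neg)
    have "B y (br a b) = \<phi> (g - \<alpha> g)" by (simp only: y g(2))
    also have "\<dots> = B z2 (\<alpha> ((g - \<alpha> g) - cp (g - \<alpha> g)) + cp (g - \<alpha> g))" by (simp only: \<phi>_def)
    also have "\<dots> = 0" by (simp add: cpf)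
    finally show ?thesis .
  qed
  have cpz: "cp z = z" by (rule cp_unique[OF z(2)]) (simp add: subspace_0[OF Nsub])
  have "B y z = \<phi> z" by (rule y)
  also have "\<dots> = B z2 (\<alpha> (z - cp z) + cp z)" by (simp only: \<phi>_def)
  also have "\<dots> = B z2 z" by (simp add: cpz a0)
  finally have "B y z = B z2 z" .
  moreover have "B z y = 0" using orth[OF z(2) yb] .
  ultimately have "B z z2 = 0" by (metis Bsym)
  then show False using z2(2) by simp
qed


end
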